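(* The logic $\mathsf{iCC}\oplus((p\wedge(p\mathrel{\Box\!\!\!\rightarrow} q))\to q)$ of intuitionistic cautious knowledge relative to information is sound and complete with respect to the class of cautious conditional frames that satisfy: if $x\in a$ then $x\in{\uparrow}R_a[x]$, for all worlds $x$ and upsets $a$.
   Context: Formulas: $\phi ::= p\mid\bot\mid\phi\wedge\phi\mid\phi\vee\phi\mid\phi\to\phi\mid\phi\mathrel{\Box\!\!\!\rightarrow}\phi$. $\mathsf{ICK}\oplus\Gamma$ is the smallest set containing intuitionistic propositional logic, $\Gamma$, $(p\mathrel{\Box\!\!\!\rightarrow}(q\wedge r))\leftrightarrow((p\mathrel{\Box\!\!\!\rightarrow} q)\wedge(p\mathrel{\Box\!\!\!\rightarrow} r))$ and $(p\mathrel{\Box\!\!\!\rightarrow}\top)\leftrightarrow\top$, closed under uniform substitution, modus ponens and congruence rules for both arguments of $\mathrel{\Box\!\!\!\rightarrow}$. $\mathsf{iCC}=\mathsf{ICK}\oplus(p\mathrel{\Box\!\!\!\rightarrow} p)\oplus(((p\mathrel{\Box\!\!\!\rightarrow} q)\wedge((p\wedge q)\mathrel{\Box\!\!\!\rightarrow} r))\to(p\mathrel{\Box\!\!\!\rightarrow} r))\oplus(((p\mathrel{\Box\!\!\!\rightarrow} q)\wedge(p\mathrel{\Box\!\!\!\rightarrow} r))\to((p\wedge q)\mathrel{\Box\!\!\!\rightarrow} r))$. A conditional frame is $(X,\leq,\mathcal{R})$, $(X,\leq)$ a nonempty preorder, $\mathcal{R}=\{R_a\mid a\text{ an upset}\}$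 with $(\leq\circ R_a)\subseteq(R_a\circ\leq)$; $x\models\phi\mathrel{\Box\!\!\!\rightarrow}\psi$ iff every $y$ with $xR_{V(\phi)}y$ satisfies $\psi$. A cautious conditional frame satisfies $R_a[x]\subseteq a$ and ($R_a[x]\subseteq b\subseteq a$ implies ${\uparrow}R_a[x]={\uparrow}R_b[x]$) for all $x$ and upsets $a,b$. *)

theory Defs
  imports Main
begin

datatype fm = Var nat | Bot | And fm fm | Or fm fm | Imp fm fm | Cond fm fm

definition Top :: fm where "Top = Imp Bot Bot"
definition Iff :: "fm \<Rightarrow> fm \<Rightarrow> fm" where "Iff a b = And (Imp a b) (Imp b a)"

fun subst :: "(nat \<Rightarrow> fm) \<Rightarrow> fm \<Rightarrow> fm" where
  "subst \<sigma> (Var p) = \<sigma> p"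
| "subst \<sigma> Bot = Bot"
| "subst \<sigma> (And a b) = And (subst \<sigma> a) (subst \<sigma> b)"
| "subst \<sigma> (Or a b) = Or (subst \<sigma> a) (subst \<sigma> b)"
| "subst \<sigma> (Imp a b) = Imp (subst \<sigma> a) (subst \<sigma> b)"
| "subst \<sigma> (Cond a b) = Cond (subst \<sigma> a) (subst \<sigma> b)"

abbreviation "vp \<equiv> Var 0"
abbreviation "vq \<equiv> Var 1"
abbreviation "vr \<equiv> Var 2"

inductive_set IPC :: "fm set" where
  K: "Imp a (Imp b a) \<in> IPC"
| S: "Imp (Imp a (Imp b c)) (Imp (Imp a b) (Imp a c)) \<in> IPC"
| C1: "Imp (And a b) a \<in> IPC"
| C2: "Imp (And a b) b \<in> IPC"
| C3: "Imp a (Imp b (And a b)) \<in> IPC"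
| D1: "Imp a (Or a b) \<in> IPC"
| D2: "Imp b (Or a b) \<in> IPC"
| D3: "Imp (Imp a c) (Imp (Imp b c) (Imp (Or a b) c)) \<in> IPC"
| EFQ: "Imp Bot a \<in> IPC"
| MP: "Imp a b \<in> IPC \<Longrightarrow> a \<in> IPC \<Longrightarrow> b \<in> IPC"

inductive_set ICK :: "fm set \<Rightarrow> fm set" for \<Gamma> :: "fm set" where
  ipc: "a \<in> IPC \<Longrightarrow> a \<in> ICK \<Gamma>"
| extra: "a \<in> \<Gamma> \<Longrightarrow> a \<in> ICK \<Gamma>"
| ax_and: "Iff (Cond vp (And vq vr)) (And (Cond vp vq) (Cond vp vr)) \<in> ICK \<Gamma>"
| ax_top: "Iff (Cond vp Top) Top \<in> ICK \<Gamma>"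
| sub: "a \<in> ICK \<Gamma> \<Longrightarrow> subst \<sigma> a \<in> ICK \<Gamma>"
| mp: "Imp a b \<in> ICK \<Gamma> \<Longrightarrow> a \<in> ICK \<Gamma> \<Longrightarrow> b \<in> ICK \<Gamma>"
| cong_l: "Iff a b \<in> ICK \<Gamma> \<Longrightarrow> Iff (Cond a c) (Cond b c) \<in> ICK \<Gamma>"
| cong_r: "Iff a b \<in> ICK \<Gamma> \<Longrightarrow> Iff (Cond c a) (Cond c b) \<in> ICK \<Gamma>"

definition iCC_axioms :: "fm set" where
  "iCC_axioms = {Cond vp vp,
     Imp (And (Cond vp vq) (Cond (And vp vq) vr)) (Cond vp vr),
     Imp (And (Cond vp vq) (Cond vp vr)) (Cond (And vp vq) vr)}"

definition iCCT :: "fm set" where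
  "iCCT = ICK (iCC_axioms \<union> {Imp (And vp (Cond vp vq)) vq})"

definition upset :: "'w set \<Rightarrow> ('w \<Rightarrow> 'w \<Rightarrow> bool) \<Rightarrow> 'w set \<Rightarrow> bool" where
  "upset X le a \<longleftrightarrow> a \<subseteq> X \<and> (\<forall>x y. x \<in> a \<longrightarrow> le x y \<longrightarrow> y \<in> a)"

definition up :: "('w \<Rightarrow> 'w \<Rightarrow> bool) \<Rightarrow> 'w set \<Rightarrow> 'w set" where
  "up le S = {y. \<exists>x\<in>S. le x y}"

definition Rimg :: "('w set \<Rightarrow> 'w \<Rightarrow> 'w \<Rightarrow> bool) \<Rightarrow> 'w set \<Rightarrow> 'w \<Rightarrow> 'w set" where
  "Rimg R a x = {y. R a x y}"

text \<open>Conditional frame (X, \<le>, {R_a | a upset}); the relations R a are only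
  constrained for upsets a. The condition (\<le> \<circ> R_a) \<subseteq> (R_a \<circ> \<le>) is read
  diagrammatically: x \<le> y, y R_a z implies x R_a w, w \<le> z for some w.\<close>
definition cframe :: "'w set \<Rightarrow> ('w \<Rightarrow> 'w \<Rightarrow> bool) \<Rightarrow> ('w set \<Rightarrow> 'w \<Rightarrow> 'w \<Rightarrow> bool) \<Rightarrow> bool" where
  "cframe X le R \<longleftrightarrow>
     X \<noteq> {} \<and>
     (\<forall>x y. le x y \<longrightarrow> x \<in> X \<and> y \<in> X) \<and>
     (\<forall>x\<in>X. le x x) \<and>
     (\<forall>x y z. le x y \<longrightarrow> le y z \<longrightarrow> le x z) \<and>
     (\<forall>a. upset X le a \<longrightarrow>
        (\<forall>x y. R a x y \<longrightarrow> x \<in> X \<and> y \<in> X) \<and>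
        (\<forall>x y z. le x y \<longrightarrow> R a y z \<longrightarrow> (\<exists>w. R a x w \<and> le w z)))"

definition cautious_frame :: "'w set \<Rightarrow> ('w \<Rightarrow> 'w \<Rightarrow> bool) \<Rightarrow> ('w set \<Rightarrow> 'w \<Rightarrow> 'w \<Rightarrow> bool) \<Rightarrow> bool" where
  "cautious_frame X le R \<longleftrightarrow> cframe X le R \<and>
     (\<forall>x\<in>X. \<forall>a b. upset X le a \<longrightarrow> upset X le b \<longrightarrow>
        Rimg R a x \<subseteq> a \<and>
        (Rimg R a x \<subseteq> b \<and> b \<subseteq> a \<longrightarrow> up le (Rimg R a x) = up le (Rimg R b x)))"

definition reflexive_cond :: "'w set \<Rightarrow> ('w \<Rightarrow> 'w \<Rightarrow> bool) \<Rightarrow> ('w set \<Rightarrow> 'w \<Rightarrow> 'w \<Rightarrow> bool) \<Rightarrow> bool" where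
  "reflexive_cond X le R \<longleftrightarrow>
     (\<forall>x\<in>X. \<forall>a. upset X le a \<longrightarrow> x \<in> a \<longrightarrow> x \<in> up le (Rimg R a x))"

definition valuation :: "'w set \<Rightarrow> ('w \<Rightarrow> 'w \<Rightarrow> bool) \<Rightarrow> (nat \<Rightarrow> 'w set) \<Rightarrow> bool" where
  "valuation X le V \<longleftrightarrow> (\<forall>p. upset X le (V p))"

fun sat :: "'w set \<Rightarrow> ('w \<Rightarrow> 'w \<Rightarrow> bool) \<Rightarrow> ('w set \<Rightarrow> 'w \<Rightarrow> 'w \<Rightarrow> bool) \<Rightarrow> (nat \<Rightarrow> 'w set) \<Rightarrow> 'w \<Rightarrow> fm \<Rightarrow> bool" where
  "sat X le R V x (Var p) \<longleftrightarrow> x \<in> V p"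
| "sat X le R V x Bot \<longleftrightarrow> False"
| "sat X le R V x (And a b) \<longleftrightarrow> sat X le R V x a \<and> sat X le R V x b"
| "sat X le R V x (Or a b) \<longleftrightarrow> sat X le R V x a \<or> sat X le R V x b"
| "sat X le R V x (Imp a b) \<longleftrightarrow> (\<forall>y\<in>X. le x y \<longrightarrow> sat X le R V y a \<longrightarrow> sat X le R V y b)"
| "sat X le R V x (Cond a b) \<longleftrightarrow>
     (\<forall>y. R {z \<in> X. sat X le R V z a} x y \<longrightarrow> sat X le R V y b)"

definition valid_frame :: "'w set \<Rightarrow> ('w \<Rightarrow> 'w \<Rightarrow> bool) \<Rightarrow> ('w set \<Rightarrow> 'w \<Rightarrow> 'w \<Rightarrow> bool) \<Rightarrow> fm \<Rightarrow> bool" where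
  "valid_frame X le R \<phi> \<longleftrightarrow> (\<forall>V. valuation X le V \<longrightarrow> (\<forall>x\<in>X. sat X le R V x \<phi>))"

definition valid_class :: "'w itself \<Rightarrow> fm \<Rightarrow> bool" where
  "valid_class _ \<phi> \<longleftrightarrow>
     (\<forall>(X :: 'w set) le R. cautious_frame X le R \<longrightarrow> reflexive_cond X le R \<longrightarrow> valid_frame X le R \<phi>)"

end

theory Submission imports Defs begin
lemma cf_le: "cframe X le R \<Longrightarrow> le x y \<Longrightarrow> x \<in> X \<and> y \<in> X"
  unfolding cframe_def by (elim conjE) simp
lemma cf_trans: "cframe X le R \<Longrightarrow> le x y \<Longrightarrow> le y z \<Longrightarrow> le x z"
  unfolding cframe_def by (elim conjE) meson
lemma cf_mono: "cframe X le R \<Longrightarrow> upset X le a \<Longrightarrow> le x y \<Longrightarrow> R a y z \<Longrightarrow> \<exists>w. R a x w \<and> le w z"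
  unfolding cframe_def by (elim conjE) (erule allE[where x=a], simp)
lemma truth_upset:
  assumes fr: "cframe X le R" and V: "valuation X le V"
  shows "upset X le {z\<in>X. sat X le R V z a}"
proof -
  have "\<forall>x y. le x y \<longrightarrow> sat X le R V x a \<longrightarrow> sat X le R V y a"
  proof (induction a)
    case (Var p) then show ?case using V unfolding valuation_def upset_def by simp
  next
    case Bot then show ?case by simp
  next
    case (And a b) then show ?case by simp
  next
    case (Or a b) then show ?case by (simp only: sat.simps) meson
  next
    case (Imp a b) then show ?case using cf_trans[OF fr] by (simp only: sat.simps) meson
  next
    case (Cond a b)
    have up: "upset X le {z\<in>X. sat X le R V z a}"
      using Cond.IH(1) cf_le[OF fr] unfolding upset_def by simp
    show ?case
    proof (intro allI impI)
      fix x y assume xy: "le x y" and sx: "sat X le R V x (Cond a b)"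
      show "sat X le R V y (Cond a b)"
      proof (simp only: sat.simps, intro allI impI)
        fix z assume "R {z \<in> X. sat X le R V z a} y z"
        then obtain w where "R {z \<in> X. sat X le R V z a} x w" "le w z"
          using cf_mono[OF fr up xy] by blast
        then show "sat X le R V z b" using sx Cond.IH(2) by simp
      qed
    qed
  qed
  then show ?thesis using cf_le[OF fr] unfolding upset_def by simp
qed

lemma cf_refl: "cframe X le R \<Longrightarrow> x \<in> X \<Longrightarrow> le x x"
  unfolding cframe_def by (elim conjE) simp
lemma cf_R: "cframe X le R \<Longrightarrow> upset X le a \<Longrightarrow> R a x y \<Longrightarrow> x \<in> X \<and> y \<in> X"
  unfolding cframe_def by (elim conjE) (erule allE[where x=a], simp)

lemma upsetD: "upset X le a \<Longrightarrow> x \<in> a \<Longrightarrow> le x y \<Longrightarrow> y \<in> a"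
  unfolding upset_def by blast

lemma persist:
  assumes fr: "cframe X le R" and V: "valuation X le V" and "le x y" and "sat X le R V x a"
  shows "sat X le R V y a"
proof -
  have "x \<in> X" "y \<in> X" using cf_le[OF fr assms(3)] by auto
  then show ?thesis using upsetD[OF truth_upset[OF fr V, of a] _ assms(3)] assms(4) by blast
qed

lemma Rin: "cframe X le R \<Longrightarrow> valuation X le V \<Longrightarrow> R {z\<in>X. sat X le R V z a} x y \<Longrightarrow> x \<in> X \<and> y \<in> X"
  by (rule cf_R[OF _ truth_upset])

lemma subst_lemma:
  assumes fr: "cframe X le R" and V: "valuation X le V" and "x \<in> X"
  shows "sat X le R V x (subst \<sigma> a) = sat X le R (\<lambda>p. {z\<in>X. sat X le R V z (\<sigma> p)}) x a"
  using assms(3)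
proof (induction a arbitrary: x)
  case (Cond a b)
  let ?V' = "\<lambda>p. {z\<in>X. sat X le R V z (\<sigma> p)}"
  have eq: "{z\<in>X. sat X le R V z (subst \<sigma> a)} = {z\<in>X. sat X le R ?V' z a}"
    using Cond.IH(1) by blast
  have inX: "\<And>y. R {z\<in>X. sat X le R V z (subst \<sigma> a)} x y \<Longrightarrow> y \<in> X"
    using Rin[OF fr V] by blast
  have "(\<forall>y. R {z\<in>X. sat X le R V z (subst \<sigma> a)} x y \<longrightarrow> sat X le R V y (subst \<sigma> b)) =
        (\<forall>y. R {z\<in>X. sat X le R V z (subst \<sigma> a)} x y \<longrightarrow> sat X le R ?V' y b)"
    using Cond.IH(2) inX by blast
  then show ?case unfolding subst.simps sat.simps eq .
next
  case (Var p) then show ?case by simp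
next
  case Bot then show ?case by simp
next
  case (And a b) then show ?case by simp
next
  case (Or a b) then show ?case by simp
next
  case (Imp a b) then show ?case by simp
qed

definition cc :: "'w set \<Rightarrow> ('w \<Rightarrow> 'w \<Rightarrow> bool) \<Rightarrow> ('w set \<Rightarrow> 'w \<Rightarrow> 'w \<Rightarrow> bool) \<Rightarrow> bool" where
  "cc X le R \<longleftrightarrow> cautious_frame X le R \<and> reflexive_cond X le R"

lemma cc_frame: "cc X le R \<Longrightarrow> cframe X le R"
  unfolding cc_def cautious_frame_def by simp

lemma valid_IPC:
  assumes fr: "cframe X le R" and "a \<in> IPC"
  shows "valid_frame X le R a"
  using assms(2)
proof induction
  case (K a b)
  show ?case unfolding valid_frame_def
  proof (intro allI impI ballI)
    fix V x assume V: "valuation X le V" and "x \<in> X"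
    show "sat X le R V x (Imp a (Imp b a))"
      using persist[OF fr V] cf_trans[OF fr] by (simp only: sat.simps) meson
  qed
next
  case (S a b c)
  show ?case unfolding valid_frame_def
  proof (intro allI impI ballI)
    fix V x assume V: "valuation X le V" and "x \<in> X"
    show "sat X le R V x (Imp (Imp a (Imp b c)) (Imp (Imp a b) (Imp a c)))"
      using cf_refl[OF fr] cf_trans[OF fr] cf_le[OF fr] by (simp only: sat.simps) meson
  qed
next
  case (C1 a b)
  then show ?case unfolding valid_frame_def by simp
next
  case (C2 a b)
  then show ?case unfolding valid_frame_def by simp
next
  case (C3 a b)
  show ?case unfolding valid_frame_def
  proof (intro allI impI ballI)
    fix V x assume V: "valuation X le V" and "x \<in> X"
    show "sat X le R V x (Imp a (Imp b (And a b)))"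
      using persist[OF fr V] by (simp only: sat.simps) meson
  qed
next
  case (D1 a b)
  then show ?case unfolding valid_frame_def by simp
next
  case (D2 a b)
  then show ?case unfolding valid_frame_def by simp
next
  case (D3 a c b)
  show ?case unfolding valid_frame_def
  proof (intro allI impI ballI)
    fix V x assume V: "valuation X le V" and "x \<in> X"
    show "sat X le R V x (Imp (Imp a c) (Imp (Imp b c) (Imp (Or a b) c)))"
      using cf_refl[OF fr] cf_trans[OF fr] cf_le[OF fr] by (simp only: sat.simps) meson
  qed
next
  case (EFQ a)
  then show ?case unfolding valid_frame_def by simp
next
  case (MP a b)
  show ?case unfolding valid_frame_def
  proof (intro allI impI ballI)
    fix V x assume V: "valuation X le V" and x: "x \<in> X"
    have "sat X le R V x (Imp a b)" "sat X le R V x a" using MP.IH V x unfolding valid_frame_def by blast+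
    then show "sat X le R V x b" using cf_refl[OF fr x] x by simp
  qed
qed

lemma valid_iff_eq:
  assumes "valid_frame X le R (Iff a b)" "valuation X le V" "cframe X le R"
  shows "{z\<in>X. sat X le R V z a} = {z\<in>X. sat X le R V z b}"
proof -
  have "\<And>z. z \<in> X \<Longrightarrow> sat X le R V z a = sat X le R V z b"
  proof -
    fix z assume z: "z \<in> X"
    have "sat X le R V z (Iff a b)" using assms(1,2) z unfolding valid_frame_def by blast
    then show "sat X le R V z a = sat X le R V z b" using cf_refl[OF assms(3) z] z unfolding Iff_def by (simp only: sat.simps) blast
  qed
  then show ?thesis by blast
qed


lemma cau_sub: "cc X le R \<Longrightarrow> x \<in> X \<Longrightarrow> upset X le a \<Longrightarrow> R a x y \<Longrightarrow> y \<in> a"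
  unfolding cc_def cautious_frame_def Rimg_def by blast

lemma cau_eq: "cc X le R \<Longrightarrow> x \<in> X \<Longrightarrow> upset X le a \<Longrightarrow> upset X le b \<Longrightarrow> Rimg R a x \<subseteq> b \<Longrightarrow> b \<subseteq> a
   \<Longrightarrow> up le (Rimg R a x) = up le (Rimg R b x)"
  unfolding cc_def cautious_frame_def by blast

lemma cc_refl: "cc X le R \<Longrightarrow> x \<in> X \<Longrightarrow> upset X le a \<Longrightarrow> x \<in> a \<Longrightarrow> \<exists>w. R a x w \<and> le w x"
  unfolding cc_def reflexive_cond_def up_def Rimg_def by blast

lemma cut_lemma:
  assumes c: "cc X le R" and V: "valuation X le V" and y: "y \<in> X"
    and h1: "sat X le R V y (Cond p q)"
  shows "(\<forall>z. R {z\<in>X. sat X le R V z p} y z \<longrightarrow> (\<exists>w. R {z\<in>X. sat X le R V z (And p q)} y w \<and> le w z))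
       \<and> (\<forall>z. R {z\<in>X. sat X le R V z (And p q)} y z \<longrightarrow> (\<exists>w. R {z\<in>X. sat X le R V z p} y w \<and> le w z))"
proof -
  have fr: "cframe X le R" using c by (rule cc_frame)
  let ?A = "{z\<in>X. sat X le R V z p}"
  let ?B = "{z\<in>X. sat X le R V z (And p q)}"
  have uA: "upset X le ?A" and uB: "upset X le ?B" using truth_upset[OF fr V] by blast+
  have "\<And>z. R ?A y z \<Longrightarrow> z \<in> ?B"
  proof -
    fix z assume yz: "R ?A y z"
    have "z \<in> ?A" by (rule cau_sub[OF c y uA yz])
    moreover have "sat X le R V z q" using h1 yz by simp
    ultimately show "z \<in> ?B" by simp
  qed
  then have s: "Rimg R ?A y \<subseteq> ?B" unfolding Rimg_def by blast
  have "?B \<subseteq> ?A" by auto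
  then have eq: "up le (Rimg R ?A y) = up le (Rimg R ?B y)" by (rule cau_eq[OF c y uA uB s])
  have upI: "\<And>S z. R S y z \<Longrightarrow> upset X le S \<Longrightarrow> z \<in> up le (Rimg R S y)"
    unfolding up_def Rimg_def using cf_R[OF fr] cf_refl[OF fr] by blast
  show ?thesis
  proof (intro conjI allI impI)
    fix z assume "R ?A y z"
    then have "z \<in> up le (Rimg R ?B y)" using upI[OF _ uA] eq by blast
    then show "\<exists>w. R ?B y w \<and> le w z" unfolding up_def Rimg_def by blast
  next
    fix z assume "R ?B y z"
    then have "z \<in> up le (Rimg R ?A y)" using upI[OF _ uB] eq by blast
    then show "\<exists>w. R ?A y w \<and> le w z" unfolding up_def Rimg_def by blast
  qed
qed

lemma sound_extra:
  assumes c: "cc X le R" and "a \<in> iCC_axioms \<union> {Imp (And vp (Cond vp vq)) vq}"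
  shows "valid_frame X le R a"
proof -
  have fr: "cframe X le R" using c by (rule cc_frame)
  consider "a = Cond vp vp" | "a = Imp (And (Cond vp vq) (Cond (And vp vq) vr)) (Cond vp vr)"
    | "a = Imp (And (Cond vp vq) (Cond vp vr)) (Cond (And vp vq) vr)"
    | "a = Imp (And vp (Cond vp vq)) vq"
    using assms(2) unfolding iCC_axioms_def by blast
  then show ?thesis
  proof cases
    case 1
    show ?thesis unfolding valid_frame_def 1
    proof (intro allI impI ballI)
      fix V x assume V: "valuation X le V" and x: "x \<in> X"
      have "\<And>y. R {z\<in>X. sat X le R V z vp} x y \<Longrightarrow> y \<in> {z\<in>X. sat X le R V z vp}"
        by (rule cau_sub[OF c x truth_upset[OF fr V]])
      then show "sat X le R V x (Cond vp vp)" unfolding sat.simps(6) by blast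
    qed
  next
    case 2
    show ?thesis unfolding valid_frame_def 2
    proof (intro allI impI ballI)
      fix V x assume V: "valuation X le V" and x: "x \<in> X"
      show "sat X le R V x (Imp (And (Cond vp vq) (Cond (And vp vq) vr)) (Cond vp vr))"
        unfolding sat.simps(5)
      proof (intro ballI impI)
        fix y assume y: "y \<in> X" and "le x y" and h: "sat X le R V y (And (Cond vp vq) (Cond (And vp vq) vr))"
        have h1: "sat X le R V y (Cond vp vq)" and h2: "sat X le R V y (Cond (And vp vq) vr)"
          using h by (simp_all only: sat.simps(3))
        note cl = cut_lemma[OF c V y h1]
        show "sat X le R V y (Cond vp vr)" unfolding sat.simps(6)
        proof (intro allI impI)
          fix z assume "R {z\<in>X. sat X le R V z vp} y z"
          then obtain w where w: "R {z\<in>X. sat X le R V z (And vp vq)} y w" "le w z" using cl by blast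
          have "sat X le R V w vr" using h2 w(1) unfolding sat.simps(6) by blast
          then show "sat X le R V z vr" using persist[OF fr V w(2)] by blast
        qed
      qed
    qed
  next
    case 3
    show ?thesis unfolding valid_frame_def 3
    proof (intro allI impI ballI)
      fix V x assume V: "valuation X le V" and x: "x \<in> X"
      show "sat X le R V x (Imp (And (Cond vp vq) (Cond vp vr)) (Cond (And vp vq) vr))"
        unfolding sat.simps(5)
      proof (intro ballI impI)
        fix y assume y: "y \<in> X" and "le x y" and h: "sat X le R V y (And (Cond vp vq) (Cond vp vr))"
        have h1: "sat X le R V y (Cond vp vq)" and h2: "sat X le R V y (Cond vp vr)"
          using h by (simp_all only: sat.simps(3))
        note cl = cut_lemma[OF c V y h1]
        show "sat X le R V y (Cond (And vp vq) vr)" unfolding sat.simps(6)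
        proof (intro allI impI)
          fix z assume "R {z\<in>X. sat X le R V z (And vp vq)} y z"
          then obtain w where w: "R {z\<in>X. sat X le R V z vp} y w" "le w z" using cl by blast
          have "sat X le R V w vr" using h2 w(1) unfolding sat.simps(6) by blast
          then show "sat X le R V z vr" using persist[OF fr V w(2)] by blast
        qed
      qed
    qed
  next
    case 4
    show ?thesis unfolding valid_frame_def 4
    proof (intro allI impI ballI)
      fix V x assume V: "valuation X le V" and x: "x \<in> X"
      show "sat X le R V x (Imp (And vp (Cond vp vq)) vq)"
        unfolding sat.simps(5)
      proof (intro ballI impI)
        fix y assume y: "y \<in> X" and "le x y" and h: "sat X le R V y (And vp (Cond vp vq))"
        have h1: "sat X le R V y vp" and h2: "sat X le R V y (Cond vp vq)"
          using h by (simp_all only: sat.simps(3))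
        have "y \<in> {z\<in>X. sat X le R V z vp}" using y h1 by blast
        then obtain w where w: "R {z\<in>X. sat X le R V z vp} y w" "le w y"
          using cc_refl[OF c y truth_upset[OF fr V]] by blast
        have "sat X le R V w vq" using h2 w(1) unfolding sat.simps(6) by blast
        then show "sat X le R V y vq" using persist[OF fr V w(2)] by blast
      qed
    qed
  qed
qed

lemma soundness:
  assumes c: "cc X le R" and "a \<in> iCCT"
  shows "valid_frame X le R a"
proof -
  have fr: "cframe X le R" using c by (rule cc_frame)
  show ?thesis using assms(2) unfolding iCCT_def
  proof induction
    case (ipc a) then show ?case using valid_IPC[OF fr] by blast
  next
    case (extra a) then show ?case using sound_extra[OF c] by blast
  next
    case ax_and
    show ?case unfolding valid_frame_def Iff_def
    proof (intro allI impI ballI)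
      fix V x assume V: "valuation X le V" and x: "x \<in> X"
      show "sat X le R V x (And (Imp (Cond vp (And vq vr)) (And (Cond vp vq) (Cond vp vr)))
          (Imp (And (Cond vp vq) (Cond vp vr)) (Cond vp (And vq vr))))"
        unfolding sat.simps by blast
    qed
  next
    case ax_top
    show ?case unfolding valid_frame_def Iff_def Top_def
    proof (intro allI impI ballI)
      fix V x assume V: "valuation X le V" and x: "x \<in> X"
      show "sat X le R V x (And (Imp (Cond vp (Imp Bot Bot)) (Imp Bot Bot)) (Imp (Imp Bot Bot) (Cond vp (Imp Bot Bot))))"
        unfolding sat.simps by blast
    qed
  next
    case (sub a \<sigma>)
    show ?case unfolding valid_frame_def
    proof (intro allI impI ballI)
      fix V x assume V: "valuation X le V" and x: "x \<in> X"
      have V': "valuation X le (\<lambda>p. {z\<in>X. sat X le R V z (\<sigma> p)})"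
        using truth_upset[OF fr V] unfolding valuation_def by blast
      have "sat X le R (\<lambda>p. {z\<in>X. sat X le R V z (\<sigma> p)}) x a"
        using sub.IH V' x unfolding valid_frame_def by blast
      then show "sat X le R V x (subst \<sigma> a)" using subst_lemma[OF fr V x] by blast
    qed
  next
    case (mp a b)
    show ?case unfolding valid_frame_def
    proof (intro allI impI ballI)
      fix V x assume V: "valuation X le V" and x: "x \<in> X"
      have "sat X le R V x (Imp a b)" "sat X le R V x a" using mp.IH V x unfolding valid_frame_def by blast+
      then show "sat X le R V x b" using cf_refl[OF fr x] x by simp
    qed
  next
    case (cong_l a b c)
    show ?case unfolding valid_frame_def
    proof (intro allI impI ballI)
      fix V x assume V: "valuation X le V" and x: "x \<in> X"
      have eq: "{z\<in>X. sat X le R V z a} = {z\<in>X. sat X le R V z b}" by (rule valid_iff_eq[OF cong_l.IH V fr])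
      show "sat X le R V x (Iff (Cond a c) (Cond b c))"
        unfolding Iff_def sat.simps eq by blast
    qed
  next
    case (cong_r a b c)
    show ?case unfolding valid_frame_def
    proof (intro allI impI ballI)
      fix V x assume V: "valuation X le V" and x: "x \<in> X"
      have eq: "{z\<in>X. sat X le R V z a} = {z\<in>X. sat X le R V z b}" by (rule valid_iff_eq[OF cong_r.IH V fr])
      have "\<And>y y'. R {z\<in>X. sat X le R V z c} y y' \<Longrightarrow> sat X le R V y' a = sat X le R V y' b"
      proof -
        fix y y' assume "R {z\<in>X. sat X le R V z c} y y'"
        then have "y' \<in> X" using Rin[OF fr V] by blast
        then show "sat X le R V y' a = sat X le R V y' b" using eq by blast
      qed
      then show "sat X le R V x (Iff (Cond c a) (Cond c b))"
        unfolding Iff_def sat.simps by blast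
    qed
  qed
qed


lemma L_ipc: "a \<in> IPC \<Longrightarrow> a \<in> iCCT" unfolding iCCT_def by (rule ICK.ipc)
lemma L_mp: "Imp a b \<in> iCCT \<Longrightarrow> a \<in> iCCT \<Longrightarrow> b \<in> iCCT" unfolding iCCT_def by (rule ICK.mp)
lemma L_sub: "a \<in> iCCT \<Longrightarrow> subst \<sigma> a \<in> iCCT" unfolding iCCT_def by (rule ICK.sub)
lemma L_cong_l: "Iff a b \<in> iCCT \<Longrightarrow> Iff (Cond a c) (Cond b c) \<in> iCCT" unfolding iCCT_def by (rule ICK.cong_l)
lemma L_cong_r: "Iff a b \<in> iCCT \<Longrightarrow> Iff (Cond c a) (Cond c b) \<in> iCCT" unfolding iCCT_def by (rule ICK.cong_r)

definition s3 :: "fm \<Rightarrow> fm \<Rightarrow> fm \<Rightarrow> nat \<Rightarrow> fm" where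
  "s3 a b c n = (if n = 0 then a else if n = 1 then b else c)"

lemma L_and: "Iff (Cond a (And b c)) (And (Cond a b) (Cond a c)) \<in> iCCT"
proof -
  have "subst (s3 a b c) (Iff (Cond vp (And vq vr)) (And (Cond vp vq) (Cond vp vr))) \<in> iCCT"
    by (rule L_sub) (unfold iCCT_def, rule ICK.ax_and)
  then show ?thesis by (simp add: Iff_def s3_def)
qed

lemma L_top: "Iff (Cond a Top) Top \<in> iCCT"
proof -
  have "subst (s3 a a a) (Iff (Cond vp Top) Top) \<in> iCCT"
    by (rule L_sub) (unfold iCCT_def, rule ICK.ax_top)
  then show ?thesis by (simp add: Iff_def s3_def Top_def)
qed

lemma L_extra: "a \<in> iCC_axioms \<union> {Imp (And vp (Cond vp vq)) vq} \<Longrightarrow> subst \<sigma> a \<in> iCCT"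
  by (rule L_sub) (unfold iCCT_def, erule ICK.extra)

lemma L_id: "Cond a a \<in> iCCT"
  using L_extra[of "Cond vp vp" "s3 a a a"] by (simp add: iCC_axioms_def s3_def)

lemma L_cut: "Imp (And (Cond a b) (Cond (And a b) c)) (Cond a c) \<in> iCCT"
  using L_extra[of "Imp (And (Cond vp vq) (Cond (And vp vq) vr)) (Cond vp vr)" "s3 a b c"]
  by (simp add: iCC_axioms_def s3_def)

lemma L_cm: "Imp (And (Cond a b) (Cond a c)) (Cond (And a b) c) \<in> iCCT"
  using L_extra[of "Imp (And (Cond vp vq) (Cond vp vr)) (Cond (And vp vq) vr)" "s3 a b c"]
  by (simp add: iCC_axioms_def s3_def)

lemma L_T: "Imp (And a (Cond a b)) b \<in> iCCT"
  using L_extra[of "Imp (And vp (Cond vp vq)) vq" "s3 a b b"]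
  by (simp add: s3_def)

inductive deriv :: "fm set \<Rightarrow> fm \<Rightarrow> bool" for G where
  dL: "a \<in> iCCT \<Longrightarrow> deriv G a"
| dH: "a \<in> G \<Longrightarrow> deriv G a"
| dMP: "deriv G (Imp a b) \<Longrightarrow> deriv G a \<Longrightarrow> deriv G b"

lemma L_K: "Imp a (Imp b a) \<in> iCCT" by (rule L_ipc, rule IPC.K)
lemma L_S: "Imp (Imp a (Imp b c)) (Imp (Imp a b) (Imp a c)) \<in> iCCT" by (rule L_ipc, rule IPC.S)
lemma L_I: "Imp a a \<in> iCCT"
  by (rule L_mp[OF L_mp[OF L_S L_K] L_K[where b=a]])

lemma deduction: "deriv (insert a G) b \<Longrightarrow> deriv G (Imp a b)"
proof (induction rule: deriv.induct)
  case (dL c) then show ?case using deriv.dMP[OF deriv.dL[OF L_K] deriv.dL] by blast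
next
  case (dH c)
  show ?case
  proof (cases "c = a")
    case True then show ?thesis using deriv.dL[OF L_I] by simp
  next
    case False then have "c \<in> G" using dH by simp
    then show ?thesis using deriv.dMP[OF deriv.dL[OF L_K] deriv.dH] by blast
  qed
next
  case (dMP c d)
  show ?case using deriv.dMP[OF deriv.dMP[OF deriv.dL[OF L_S] dMP.IH(1)] dMP.IH(2)] .
qed

lemma deriv_mono: "deriv G a \<Longrightarrow> G \<subseteq> H \<Longrightarrow> deriv H a"
  by (induction rule: deriv.induct) (auto intro: deriv.intros)

lemma deriv_empty: "deriv {} a \<Longrightarrow> a \<in> iCCT"
  by (induction rule: deriv.induct) (auto intro: L_mp)

lemma L_by_deriv: "deriv {a} b \<Longrightarrow> Imp a b \<in> iCCT"
  using deduction[of a "{}" b] deriv_empty by simp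

lemma deriv_L_imp: "Imp a b \<in> iCCT \<Longrightarrow> deriv G a \<Longrightarrow> deriv G b"
  by (rule deriv.dMP[OF deriv.dL])

lemma L_C1: "Imp (And a b) a \<in> iCCT" by (rule L_ipc, rule IPC.C1)
lemma L_C2: "Imp (And a b) b \<in> iCCT" by (rule L_ipc, rule IPC.C2)
lemma L_C3: "Imp a (Imp b (And a b)) \<in> iCCT" by (rule L_ipc, rule IPC.C3)
lemma L_D1: "Imp a (Or a b) \<in> iCCT" by (rule L_ipc, rule IPC.D1)
lemma L_D2: "Imp b (Or a b) \<in> iCCT" by (rule L_ipc, rule IPC.D2)
lemma L_D3: "Imp (Imp a c) (Imp (Imp b c) (Imp (Or a b) c)) \<in> iCCT" by (rule L_ipc, rule IPC.D3)
lemma L_EFQ: "Imp Bot a \<in> iCCT" by (rule L_ipc, rule IPC.EFQ)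

lemma d_andI: "deriv G a \<Longrightarrow> deriv G b \<Longrightarrow> deriv G (And a b)"
  by (rule deriv.dMP[OF deriv.dMP[OF deriv.dL[OF L_C3]]])
lemma d_andE1: "deriv G (And a b) \<Longrightarrow> deriv G a"
  by (rule deriv_L_imp[OF L_C1])
lemma d_andE2: "deriv G (And a b) \<Longrightarrow> deriv G b"
  by (rule deriv_L_imp[OF L_C2])

lemma L_andI: "a \<in> iCCT \<Longrightarrow> b \<in> iCCT \<Longrightarrow> And a b \<in> iCCT"
  by (rule L_mp[OF L_mp[OF L_C3]])

lemma L_iff1: "Iff a b \<in> iCCT \<Longrightarrow> Imp a b \<in> iCCT"
  unfolding Iff_def by (rule L_mp[OF L_C1])
lemma L_iff2: "Iff a b \<in> iCCT \<Longrightarrow> Imp b a \<in> iCCT"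
  unfolding Iff_def by (rule L_mp[OF L_C2])
lemma L_iffI: "Imp a b \<in> iCCT \<Longrightarrow> Imp b a \<in> iCCT \<Longrightarrow> Iff a b \<in> iCCT"
  unfolding Iff_def by (rule L_andI)

lemma L_trans: "Imp a b \<in> iCCT \<Longrightarrow> Imp b c \<in> iCCT \<Longrightarrow> Imp a c \<in> iCCT"
  apply (rule L_by_deriv)
  apply (rule deriv_L_imp, assumption)
  apply (rule deriv_L_imp, assumption)
  apply (rule deriv.dH, simp)
  done

lemma L_mono: "Imp c d \<in> iCCT \<Longrightarrow> Imp (Cond a c) (Cond a d) \<in> iCCT"
proof -
  assume h: "Imp c d \<in> iCCT"
  have "Imp c (And c d) \<in> iCCT"
    apply (rule L_by_deriv)
    apply (rule d_andI)
     apply (rule deriv.dH, simp)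
    apply (rule deriv_L_imp[OF h])
    apply (rule deriv.dH, simp)
    done
  then have "Iff c (And c d) \<in> iCCT" using L_iffI L_C1 by blast
  then have "Imp (Cond a c) (Cond a (And c d)) \<in> iCCT" using L_cong_r L_iff1 by blast
  moreover have "Imp (Cond a (And c d)) (And (Cond a c) (Cond a d)) \<in> iCCT" using L_and L_iff1 by blast
  ultimately show ?thesis using L_trans L_C2 by blast
qed

lemma L_nec: "b \<in> iCCT \<Longrightarrow> Cond a b \<in> iCCT"
proof -
  assume b: "b \<in> iCCT"
  have top: "Top \<in> iCCT" unfolding Top_def by (rule L_EFQ)
  have "Imp Top b \<in> iCCT" by (rule L_mp[OF L_K b])
  then have "Imp (Cond a Top) (Cond a b) \<in> iCCT" by (rule L_mono)
  moreover have "Cond a Top \<in> iCCT" using L_mp[OF L_iff2[OF L_top] top] .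
  ultimately show ?thesis by (rule L_mp)
qed

lemma L_and_comm: "Imp (And a b) (And b a) \<in> iCCT"
  apply (rule L_by_deriv)
  apply (rule d_andI)
   apply (rule d_andE2, rule deriv.dH, simp)
  apply (rule d_andE1, rule deriv.dH, simp)
  done

lemma L_cond_comm: "Imp (Cond (And a b) c) (Cond (And b a) c) \<in> iCCT"
  using L_iff1[OF L_cong_l[OF L_iffI[OF L_and_comm L_and_comm]]] .


definition ptheory :: "fm set \<Rightarrow> bool" where
  "ptheory G \<longleftrightarrow> (\<forall>a. deriv G a \<longrightarrow> a \<in> G) \<and> Bot \<notin> G \<and> (\<forall>a b. Or a b \<in> G \<longrightarrow> a \<in> G \<or> b \<in> G)"

lemma pt_closed: "ptheory G \<Longrightarrow> deriv G a \<Longrightarrow> a \<in> G"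
  unfolding ptheory_def by blast
lemma pt_L: "ptheory G \<Longrightarrow> a \<in> iCCT \<Longrightarrow> a \<in> G"
  using pt_closed deriv.dL by blast
lemma pt_mp: "ptheory G \<Longrightarrow> Imp a b \<in> G \<Longrightarrow> a \<in> G \<Longrightarrow> b \<in> G"
  using pt_closed deriv.dMP deriv.dH by metis
lemma pt_Limp: "ptheory G \<Longrightarrow> Imp a b \<in> iCCT \<Longrightarrow> a \<in> G \<Longrightarrow> b \<in> G"
  using pt_mp pt_L by blast
lemma pt_and: "ptheory G \<Longrightarrow> And a b \<in> G \<longleftrightarrow> a \<in> G \<and> b \<in> G"
  using pt_Limp[OF _ L_C1] pt_Limp[OF _ L_C2] pt_mp[OF _ pt_Limp[OF _ L_C3]] by blast
lemma pt_or: "ptheory G \<Longrightarrow> Or a b \<in> G \<longleftrightarrow> a \<in> G \<or> b \<in> G"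
  using pt_Limp[OF _ L_D1] pt_Limp[OF _ L_D2] unfolding ptheory_def by blast
lemma pt_bot: "ptheory G \<Longrightarrow> Bot \<notin> G"
  unfolding ptheory_def by blast

lemma deriv_chain: "deriv (\<Union>C) a \<Longrightarrow> C \<noteq> {} \<Longrightarrow> chain\<^sub>\<subseteq> C \<Longrightarrow> \<exists>D\<in>C. deriv D a"
proof (induction rule: deriv.induct)
  case (dL a) then show ?case using deriv.dL by blast
next
  case (dH a) then show ?case using deriv.dH by blast
next
  case (dMP a b)
  obtain D1 where D1: "D1 \<in> C" "deriv D1 (Imp a b)" using dMP by blast
  obtain D2 where D2: "D2 \<in> C" "deriv D2 a" using dMP by blast
  have "D1 \<subseteq> D2 \<or> D2 \<subseteq> D1" using dMP.prems(2) D1(1) D2(1) unfolding chain_subset_def by blast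
  then show ?case
  proof
    assume "D1 \<subseteq> D2" then show ?thesis using D2 deriv.dMP[OF deriv_mono[OF D1(2)]] by blast
  next
    assume "D2 \<subseteq> D1" then show ?thesis using D1 deriv.dMP[OF _ deriv_mono[OF D2(2)]] by blast
  qed
qed

lemma lindenbaum:
  assumes "\<not> deriv G a"
  shows "\<exists>D. G \<subseteq> D \<and> ptheory D \<and> a \<notin> D"
proof -
  let ?A = "{D. G \<subseteq> D \<and> \<not> deriv D a}"
  have "\<forall>C\<in>chains ?A. \<exists>U\<in>?A. \<forall>X\<in>C. X \<subseteq> U"
  proof
    fix C assume C: "C \<in> chains ?A"
    show "\<exists>U\<in>?A. \<forall>X\<in>C. X \<subseteq> U"
    proof (cases "C = {}")
      case True then show ?thesis using assms by blast
    next
      case False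
      have ch: "chain\<^sub>\<subseteq> C" and sub: "C \<subseteq> ?A" using C unfolding chains_def by blast+
      have "\<not> deriv (\<Union>C) a"
      proof
        assume "deriv (\<Union>C) a"
        then obtain D where "D \<in> C" "deriv D a" using deriv_chain[OF _ False ch] by blast
        then show False using sub by blast
      qed
      moreover have "G \<subseteq> \<Union>C" using False sub by blast
      ultimately show ?thesis by blast
    qed
  qed
  then obtain M where M: "M \<in> ?A" and max: "\<forall>X\<in>?A. M \<subseteq> X \<longrightarrow> X = M"
    using Zorn_Lemma2[of ?A] by blast
  have GM: "G \<subseteq> M" and nd: "\<not> deriv M a" using M by blast+
  have ins: "\<And>b. b \<notin> M \<Longrightarrow> deriv M (Imp b a)"
  proof -
    fix b assume b: "b \<notin> M"
    have "insert b M \<noteq> M" using b by blast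
    then have "insert b M \<notin> ?A" using max GM by blast
    then have "deriv (insert b M) a" using GM by blast
    then show "deriv M (Imp b a)" by (rule deduction)
  qed
  have cl: "\<forall>b. deriv M b \<longrightarrow> b \<in> M"
  proof (intro allI impI)
    fix b assume "deriv M b"
    show "b \<in> M"
    proof (rule ccontr)
      assume "b \<notin> M"
      then have "deriv M (Imp b a)" by (rule ins)
      then have "deriv M a" using deriv.dMP \<open>deriv M b\<close> by blast
      then show False using nd by blast
    qed
  qed
  have bot: "Bot \<notin> M"
  proof
    assume "Bot \<in> M"
    then have "deriv M a" using deriv_L_imp[OF L_EFQ deriv.dH] by blast
    then show False using nd by blast
  qed
  have pr: "\<forall>b c. Or b c \<in> M \<longrightarrow> b \<in> M \<or> c \<in> M"
  proof (intro allI impI)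
    fix b c assume o: "Or b c \<in> M"
    show "b \<in> M \<or> c \<in> M"
    proof (rule ccontr)
      assume "\<not> (b \<in> M \<or> c \<in> M)"
      then have "deriv M (Imp b a)" "deriv M (Imp c a)" using ins by blast+
      then have "deriv M a"
        using deriv.dMP[OF deriv.dMP[OF deriv.dMP[OF deriv.dL[OF L_D3]]] deriv.dH[OF o]] by blast
      then show False using nd by blast
    qed
  qed
  have "ptheory M" unfolding ptheory_def using cl bot pr by blast
  moreover have "a \<notin> M" using nd deriv.dH by blast
  ultimately show ?thesis using GM by blast
qed


definition cX :: "fm set set set" where "cX = {S. ptheory (\<Union>S)}"
definition cle :: "fm set set \<Rightarrow> fm set set \<Rightarrow> bool" where
  "cle S T \<longleftrightarrow> S \<in> cX \<and> T \<in> cX \<and> \<Union>S \<subseteq> \<Union>T"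
definition tr :: "fm \<Rightarrow> fm set set set" where "tr a = {S\<in>cX. a \<in> \<Union>S}"
definition CC :: "fm set set \<Rightarrow> fm \<Rightarrow> fm set" where "CC x a = {b. Cond a b \<in> \<Union>x}"
definition UU :: "fm set set \<Rightarrow> fm \<Rightarrow> fm set set set" where "UU x a = {y\<in>cX. CC x a \<subseteq> \<Union>y}"
definition anchor :: "fm set set \<Rightarrow> fm set set set \<Rightarrow> fm \<Rightarrow> bool" where
  "anchor x A a \<longleftrightarrow> A \<subseteq> tr a \<and> UU x a \<subseteq> A"
definition cR :: "fm set set set \<Rightarrow> fm set set \<Rightarrow> fm set set \<Rightarrow> bool" where
  "cR A x y \<longleftrightarrow> x \<in> cX \<and> y \<in> cX \<and> y \<in> A \<and> (\<forall>a. anchor x A a \<longrightarrow> y \<in> UU x a)"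
definition cV :: "nat \<Rightarrow> fm set set set" where "cV p = tr (Var p)"

lemma cX_single: "ptheory D \<Longrightarrow> {D} \<in> cX" unfolding cX_def by simp
lemma cX_pt: "x \<in> cX \<Longrightarrow> ptheory (\<Union>x)" unfolding cX_def by simp

lemma CC_closed:
  assumes x: "x \<in> cX" shows "deriv (CC x a) b \<Longrightarrow> b \<in> CC x a"
proof (induction rule: deriv.induct)
  case (dL c) then show ?case unfolding CC_def using pt_L[OF cX_pt[OF x] L_nec] by blast
next
  case (dH c) then show ?case .
next
  case (dMP c d)
  have "And (Cond a (Imp c d)) (Cond a c) \<in> \<Union>x" using dMP.IH pt_and[OF cX_pt[OF x]] unfolding CC_def by blast
  then have h: "Cond a (And (Imp c d) c) \<in> \<Union>x" using pt_Limp[OF cX_pt[OF x] L_iff2[OF L_and]] by blast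
  have "Imp (And (Imp c d) c) d \<in> iCCT"
    apply (rule L_by_deriv)
    apply (rule deriv.dMP)
     apply (rule d_andE1, rule deriv.dH, simp)
    apply (rule d_andE2, rule deriv.dH, simp)
    done
  then show ?case using pt_Limp[OF cX_pt[OF x] L_mono h] unfolding CC_def by blast
qed

lemma UU_sep:
  assumes x: "x \<in> cX" and n: "Cond a b \<notin> \<Union>x"
  shows "\<exists>y\<in>UU x a. b \<notin> \<Union>y"
proof -
  have "\<not> deriv (CC x a) b" using CC_closed[OF x] n unfolding CC_def by blast
  then obtain D where "CC x a \<subseteq> D" "ptheory D" "b \<notin> D" using lindenbaum by blast
  then show ?thesis using cX_single unfolding UU_def by (intro bexI[of _ "{D}"]) auto
qed

lemma UU_tr: "x \<in> cX \<Longrightarrow> UU x a \<subseteq> tr b \<Longrightarrow> Cond a b \<in> \<Union>x"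
  using UU_sep unfolding tr_def by blast

lemma swap:
  assumes x: "x \<in> cX" and h1: "Cond a b \<in> \<Union>x" and h2: "Cond b a \<in> \<Union>x" and h3: "Cond a c \<in> \<Union>x"
  shows "Cond b c \<in> \<Union>x"
proof -
  note pt = cX_pt[OF x]
  have "Cond (And a b) c \<in> \<Union>x" using pt_Limp[OF pt L_cm] pt_and[OF pt] h1 h3 by blast
  then have "Cond (And b a) c \<in> \<Union>x" using pt_Limp[OF pt L_cond_comm] by blast
  then show ?thesis using pt_Limp[OF pt L_cut] pt_and[OF pt] h2 by blast
qed

lemma anchor_consistent:
  assumes x: "x \<in> cX" and a1: "anchor x A a" and a2: "anchor x A b"
  shows "UU x a = UU x b"
proof -
  have ab: "Cond a b \<in> \<Union>x" using UU_tr[OF x] a1 a2 unfolding anchor_def by blast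
  have ba: "Cond b a \<in> \<Union>x" using UU_tr[OF x] a1 a2 unfolding anchor_def by blast
  have "CC x a = CC x b" unfolding CC_def using swap[OF x ab ba] swap[OF x ba ab] by blast
  then show ?thesis unfolding UU_def by simp
qed

lemma Rimg_anchor:
  assumes x: "x \<in> cX" and an: "anchor x A a"
  shows "{y. cR A x y} = UU x a"
proof
  show "{y. cR A x y} \<subseteq> UU x a" using an unfolding cR_def by blast
next
  show "UU x a \<subseteq> {y. cR A x y}"
  proof
    fix y assume y: "y \<in> UU x a"
    have "y \<in> A" using an y unfolding anchor_def by blast
    moreover have "y \<in> cX" using y unfolding UU_def by blast
    moreover have "\<forall>b. anchor x A b \<longrightarrow> y \<in> UU x b" using anchor_consistent[OF x an] y by blast
    ultimately show "y \<in> {y. cR A x y}" using x unfolding cR_def by blast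
  qed
qed

lemma Rimg_noanchor:
  assumes x: "x \<in> cX" and A: "A \<subseteq> cX" and an: "\<not> (\<exists>a. anchor x A a)"
  shows "{y. cR A x y} = A"
  using x A an unfolding cR_def by blast

lemma anchor_tr: "x \<in> cX \<Longrightarrow> anchor x (tr a) a"
  unfolding anchor_def UU_def tr_def CC_def using pt_L[OF cX_pt L_id] by blast

lemma truth: "x \<in> cX \<Longrightarrow> sat cX cle cR cV x f \<longleftrightarrow> f \<in> \<Union>x"
proof (induction f arbitrary: x)
  case (Var p) then show ?case unfolding cV_def tr_def by simp
next
  case Bot then show ?case using pt_bot[OF cX_pt] by simp
next
  case (And a b) then show ?case using pt_and[OF cX_pt] by simp
next
  case (Or a b) then show ?case using pt_or[OF cX_pt] by simp
next
  case (Imp a b)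
  note x = Imp.prems
  show ?case
  proof
    assume s: "sat cX cle cR cV x (Imp a b)"
    have s': "\<forall>y\<in>cX. cle x y \<longrightarrow> sat cX cle cR cV y a \<longrightarrow> sat cX cle cR cV y b"
      using s unfolding sat.simps(5) .
    show "Imp a b \<in> \<Union>x"
    proof (rule ccontr)
      assume n: "Imp a b \<notin> \<Union>x"
      have nd: "\<not> deriv (insert a (\<Union>x)) b"
      proof
        assume "deriv (insert a (\<Union>x)) b"
        then have "deriv (\<Union>x) (Imp a b)" by (rule deduction)
        from pt_closed[OF cX_pt[OF x] this] n show False by (rule notE[rotated])
      qed
      obtain D where D: "insert a (\<Union>x) \<subseteq> D" "ptheory D" "b \<notin> D" using lindenbaum[OF nd] by blast
      have y: "{D} \<in> cX" using cX_single[OF D(2)] .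
      have "\<Union>x \<subseteq> \<Union>{D}" using D(1) by simp
      then have xy: "cle x {D}" unfolding cle_def using x y by (intro conjI)
      have "a \<in> \<Union>{D}" using D(1) by simp
      then have ya: "sat cX cle cR cV {D} a" using Imp.IH(1)[OF y] by (rule iffD2[rotated])
      have "sat cX cle cR cV {D} b" using s' y xy ya by blast
      then have "b \<in> \<Union>{D}" using Imp.IH(2)[OF y] by (rule iffD1[rotated])
      then show False using D(3) by simp
    qed
  next
    assume i: "Imp a b \<in> \<Union>x"
    show "sat cX cle cR cV x (Imp a b)" unfolding sat.simps(5)
    proof (intro ballI impI)
      fix y assume y: "y \<in> cX" and xy: "cle x y" and ya: "sat cX cle cR cV y a"
      have "\<Union>x \<subseteq> \<Union>y" using xy unfolding cle_def by simp
      then have i2: "Imp a b \<in> \<Union>y" using i by (rule subsetD)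
      have a2: "a \<in> \<Union>y" using Imp.IH(1)[OF y] ya by (rule iffD1)
      have "b \<in> \<Union>y" by (rule pt_mp[OF cX_pt[OF y] i2 a2])
      then show "sat cX cle cR cV y b" using Imp.IH(2)[OF y] by (rule iffD2[rotated])
    qed
  qed
next
  case (Cond a b)
  note x = Cond.prems
  have eq: "{z\<in>cX. sat cX cle cR cV z a} = tr a" unfolding tr_def
  proof (rule Collect_cong)
    fix z show "(z \<in> cX \<and> sat cX cle cR cV z a) = (z \<in> cX \<and> a \<in> \<Union>z)"
      using Cond.IH(1)[of z] by (cases "z \<in> cX") simp_all
  qed
  have Rs: "{y. cR (tr a) x y} = UU x a" by (rule Rimg_anchor[OF x anchor_tr[OF x]])
  have UX: "\<And>y. y \<in> UU x a \<Longrightarrow> y \<in> cX" unfolding UU_def by simp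
  show ?case
  proof
    assume "sat cX cle cR cV x (Cond a b)"
    then have h: "\<forall>y. cR (tr a) x y \<longrightarrow> sat cX cle cR cV y b" unfolding sat.simps(6) eq .
    show "Cond a b \<in> \<Union>x"
    proof (rule ccontr)
      assume "Cond a b \<notin> \<Union>x"
      then obtain y where y: "y \<in> UU x a" "b \<notin> \<Union>y" using UU_sep[OF x] by blast
      have "cR (tr a) x y" using y(1) Rs by blast
      then have "sat cX cle cR cV y b" using h by simp
      then have "b \<in> \<Union>y" using Cond.IH(2)[OF UX[OF y(1)]] by (rule iffD1[rotated])
      then show False using y(2) by (rule notE[rotated])
    qed
  next
    assume c: "Cond a b \<in> \<Union>x"
    show "sat cX cle cR cV x (Cond a b)" unfolding sat.simps(6) eq
    proof (intro allI impI)
      fix y assume "cR (tr a) x y"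
      then have y: "y \<in> UU x a" using Rs by blast
      then have "b \<in> \<Union>y" using c unfolding UU_def CC_def by blast
      then show "sat cX cle cR cV y b" using Cond.IH(2)[OF UX[OF y]] by (rule iffD2[rotated])
    qed
  qed
qed


lemma c_upset: "upset cX cle A \<Longrightarrow> A \<subseteq> cX" unfolding upset_def by blast

lemma cle_refl: "x \<in> cX \<Longrightarrow> cle x x" unfolding cle_def by simp

lemma UU_mono: "\<Union>x \<subseteq> \<Union>x' \<Longrightarrow> UU x' a \<subseteq> UU x a"
  unfolding UU_def CC_def by blast

lemma anchor_mono: "\<Union>x \<subseteq> \<Union>x' \<Longrightarrow> anchor x A a \<Longrightarrow> anchor x' A a"
  unfolding anchor_def using UU_mono by blast

lemma canon_cframe: "cX \<noteq> {} \<Longrightarrow> cframe cX cle cR"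
  unfolding cframe_def
proof (intro conjI allI impI ballI)
  show "cX \<noteq> {} \<Longrightarrow> cX \<noteq> {}" .
next
  fix x y assume "cle x y" then show "x \<in> cX" unfolding cle_def by simp
next
  fix x y assume "cle x y" then show "y \<in> cX" unfolding cle_def by simp
next
  fix x assume "x \<in> cX" then show "cle x x" by (rule cle_refl)
next
  fix x y z assume "cle x y" "cle y z" then show "cle x z" unfolding cle_def by blast
next
  fix a x y assume "cR a x y" then show "x \<in> cX" unfolding cR_def by simp
next
  fix a x y assume "cR a x y" then show "y \<in> cX" unfolding cR_def by simp
next
  fix a x y z assume xy: "cle x y" and yz: "cR a y z"
  have sub: "\<Union>x \<subseteq> \<Union>y" using xy unfolding cle_def by simp
  have "cR a x z" unfolding cR_def
  proof (intro conjI allI impI)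
    show "x \<in> cX" using xy unfolding cle_def by simp
    show "z \<in> cX" using yz unfolding cR_def by simp
    show "z \<in> a" using yz unfolding cR_def by simp
  next
    fix b assume "anchor x a b"
    then have "anchor y a b" by (rule anchor_mono[OF sub])
    then have "z \<in> UU y b" using yz unfolding cR_def by blast
    then show "z \<in> UU x b" using UU_mono[OF sub] by blast
  qed
  moreover have "cle z z" using yz cle_refl unfolding cR_def by blast
  ultimately show "\<exists>w. cR a x w \<and> cle w z" by blast
qed

lemma Rimg_eq:
  assumes x: "x \<in> cX" and A: "A \<subseteq> cX" and B: "B \<subseteq> cX" and s1: "Rimg cR A x \<subseteq> B" and s2: "B \<subseteq> A"
  shows "Rimg cR A x = Rimg cR B x"
proof (cases "\<exists>a. anchor x A a")
  case True
  then obtain a where an: "anchor x A a" by blast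
  have RA: "Rimg cR A x = UU x a" unfolding Rimg_def by (rule Rimg_anchor[OF x an])
  have "anchor x B a" using an s1 s2 RA unfolding anchor_def by blast
  then have "Rimg cR B x = UU x a" unfolding Rimg_def by (rule Rimg_anchor[OF x])
  then show ?thesis using RA by simp
next
  case False
  then have "Rimg cR A x = A" unfolding Rimg_def by (rule Rimg_noanchor[OF x A])
  then have "B = A" using s1 s2 by blast
  then show ?thesis by simp
qed

lemma canon_cautious: "cX \<noteq> {} \<Longrightarrow> cautious_frame cX cle cR"
proof -
  assume ne: "cX \<noteq> {}"
  have "\<forall>x\<in>cX. \<forall>a b. upset cX cle a \<longrightarrow> upset cX cle b \<longrightarrow>
        Rimg cR a x \<subseteq> a \<and>
        (Rimg cR a x \<subseteq> b \<and> b \<subseteq> a \<longrightarrow> up cle (Rimg cR a x) = up cle (Rimg cR b x))"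
  proof (intro ballI allI impI conjI)
    fix x a b assume "x \<in> cX"
    show "Rimg cR a x \<subseteq> a" unfolding Rimg_def cR_def by blast
  next
    fix x a b assume x: "x \<in> cX" and ua: "upset cX cle a" and ub: "upset cX cle b"
      and h: "Rimg cR a x \<subseteq> b \<and> b \<subseteq> a"
    have "Rimg cR a x = Rimg cR b x" using Rimg_eq[OF x c_upset[OF ua] c_upset[OF ub]] h by blast
    then show "up cle (Rimg cR a x) = up cle (Rimg cR b x)" by simp
  qed
  then show ?thesis unfolding cautious_frame_def using canon_cframe[OF ne] by blast
qed

lemma canon_refl: "reflexive_cond cX cle cR"
  unfolding reflexive_cond_def
proof (intro ballI allI impI)
  fix x A assume x: "x \<in> cX" and uA: "upset cX cle A" and xA: "x \<in> A"
  have "cR A x x" unfolding cR_def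
  proof (intro conjI allI impI)
    show "x \<in> cX" using x .
    show "x \<in> cX" using x .
    show "x \<in> A" using xA .
  next
    fix a assume "anchor x A a"
    then have "a \<in> \<Union>x" using xA unfolding anchor_def tr_def by blast
    then have "CC x a \<subseteq> \<Union>x" unfolding CC_def
      using pt_Limp[OF cX_pt[OF x] L_T] pt_and[OF cX_pt[OF x]] by blast
    then show "x \<in> UU x a" using x unfolding UU_def by simp
  qed
  then show "x \<in> up cle (Rimg cR A x)" unfolding up_def Rimg_def using cle_refl[OF x] by blast
qed

lemma completeness:
  assumes v: "valid_class TYPE(fm set set) f"
  shows "f \<in> iCCT"
proof (rule ccontr)
  assume n: "f \<notin> iCCT"
  have "\<not> deriv {} f" using deriv_empty n by blast
  then obtain D where D: "ptheory D" "f \<notin> D" using lindenbaum by blast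
  have y: "{D} \<in> cX" by (rule cX_single[OF D(1)])
  then have ne: "cX \<noteq> {}" by blast
  have V: "valuation cX cle cV" unfolding valuation_def cV_def upset_def tr_def cle_def by blast
  have "valid_frame cX cle cR f" using v canon_cautious[OF ne] canon_refl unfolding valid_class_def by blast
  then have "sat cX cle cR cV {D} f" using V y unfolding valid_frame_def by blast
  then have "f \<in> \<Union>{D}" using truth[OF y] by (rule iffD1[rotated])
  then show False using D(2) by simp
qed

theorem theorem6p10:
  shows "(\<phi> \<in> iCCT \<longrightarrow> valid_class TYPE('w) \<phi>) \<and>
         (valid_class TYPE(fm set set) \<phi> \<longrightarrow> \<phi> \<in> iCCT)"
proof (intro conjI impI)
  assume "\<phi> \<in> iCCT"
  then show "valid_class TYPE('w) \<phi>" unfolding valid_class_def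
    using soundness unfolding cc_def by blast
next
  assume "valid_class TYPE(fm set set) \<phi>"
  then show "\<phi> \<in> iCCT" by (rule completeness)
qed

end
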